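(* For every $n>1$ the complete graph $K_n$ admits no extended irregular dominating set, and for all positive integers $m,n$ the complete bipartite graph $K_{m,n}$ admits no extended irregular dominating set.
   Context: Let $\Gamma=(V,E)$ be a finite simple undirected graph with graph distance $d$. A vertex $v$ carrying a non-negative integer label $\ell$ dominates (covers) exactly the vertices $u$ with $d(u,v)=\ell$; a vertex labeled $0$ dominates only itself. An extended irregular dominating set is a set $S\subseteq V$ together with a labeling $\lambda:S\to\mathbb{Z}_{\ge 0}$ with distinct labels on distinct vertices, such that every vertex of $V$ is dominated by at least one vertex of $S$; it is assumed that some vertex of $S$ has label $0$. *)

theory Defs
  imports Main
begin

text \<open>Graph distance: d(u,v) = k iff there is a walk of length k
  from u to v inside V and no shorter one (vertices in different components have no
  distance, hence dominate nothing).\<close>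

definition simple_graph :: "'a set \<Rightarrow> ('a \<Rightarrow> 'a \<Rightarrow> bool) \<Rightarrow> bool" where
  "simple_graph V E \<longleftrightarrow> finite V \<and> (\<forall>u v. E u v \<longrightarrow> E v u) \<and> (\<forall>u. \<not> E u u)
     \<and> (\<forall>u v. E u v \<longrightarrow> u \<in> V \<and> v \<in> V)"

definition has_walk :: "'a set \<Rightarrow> ('a \<Rightarrow> 'a \<Rightarrow> bool) \<Rightarrow> 'a \<Rightarrow> 'a \<Rightarrow> nat \<Rightarrow> bool" where
  "has_walk V E u v k \<longleftrightarrow> (\<exists>xs. length xs = Suc k \<and> hd xs = u \<and> last xs = v \<and> set xs \<subseteq> V
     \<and> (\<forall>i<k. E (xs ! i) (xs ! Suc i)))"

definition graph_dist_eq :: "'a set \<Rightarrow> ('a \<Rightarrow> 'a \<Rightarrow> bool) \<Rightarrow> 'a \<Rightarrow> 'a \<Rightarrow> nat \<Rightarrow> bool" where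
  "graph_dist_eq V E u v k \<longleftrightarrow> has_walk V E u v k \<and> (\<forall>j<k. \<not> has_walk V E u v j)"

definition dominates :: "'a set \<Rightarrow> ('a \<Rightarrow> 'a \<Rightarrow> bool) \<Rightarrow> ('a \<Rightarrow> nat) \<Rightarrow> 'a \<Rightarrow> 'a \<Rightarrow> bool" where
  "dominates V E lab v u \<longleftrightarrow> graph_dist_eq V E u v (lab v)"

definition ext_irr_dom_set :: "'a set \<Rightarrow> ('a \<Rightarrow> 'a \<Rightarrow> bool) \<Rightarrow> 'a set \<Rightarrow> ('a \<Rightarrow> nat) \<Rightarrow> bool" where
  "ext_irr_dom_set V E S lab \<longleftrightarrow> S \<subseteq> V \<and> inj_on lab S \<and> (\<exists>v\<in>S. lab v = 0)
     \<and> (\<forall>u\<in>V. \<exists>v\<in>S. dominates V E lab v u)"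

definition admits_ext_irr_dom_set :: "'a set \<Rightarrow> ('a \<Rightarrow> 'a \<Rightarrow> bool) \<Rightarrow> bool" where
  "admits_ext_irr_dom_set V E \<longleftrightarrow> (\<exists>S lab. ext_irr_dom_set V E S lab)"

definition Kn_V :: "nat \<Rightarrow> nat set" where "Kn_V n = {0..<n}"
definition Kn_E :: "nat \<Rightarrow> nat \<Rightarrow> nat \<Rightarrow> bool" where
  "Kn_E n u v \<longleftrightarrow> u < n \<and> v < n \<and> u \<noteq> v"

definition Kmn_V :: "nat \<Rightarrow> nat \<Rightarrow> (nat + nat) set" where
  "Kmn_V m n = Inl ` {0..<m} \<union> Inr ` {0..<n}"
definition Kmn_E :: "nat \<Rightarrow> nat \<Rightarrow> nat + nat \<Rightarrow> nat + nat \<Rightarrow> bool" where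
  "Kmn_E m n u v \<longleftrightarrow> u \<in> Kmn_V m n \<and> v \<in> Kmn_V m n \<and>
     ((\<exists>a b. u = Inl a \<and> v = Inr b) \<or> (\<exists>a b. u = Inr a \<and> v = Inl b))"

end

theory Submission imports Defs begin
lemma hw0: "has_walk V E u v 0 \<longleftrightarrow> u = v \<and> u \<in> V"
  unfolding has_walk_def by (auto simp: length_Suc_conv)
lemma hw1: "has_walk V E u v 1 \<longleftrightarrow> E u v \<and> u \<in> V \<and> v \<in> V"
  unfolding has_walk_def
  apply (auto simp: length_Suc_conv)
  apply (rule_tac x="[u,v]" in exI) by auto
lemma hw1': "has_walk V E u v (Suc 0) \<longleftrightarrow> E u v \<and> u \<in> V \<and> v \<in> V"
  using hw1 by simp

lemma hw2: "has_walk V E u v 2 \<longleftrightarrow> (\<exists>w\<in>V. E u w \<and> E w v) \<and> u \<in> V \<and> v \<in> V"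
proof
  assume "has_walk V E u v 2"
  then obtain xs where xs: "length xs = 3" "hd xs = u" "last xs = v" "set xs \<subseteq> V"
    "\<forall>i<2. E (xs ! i) (xs ! Suc i)" unfolding has_walk_def by auto
  then obtain x y z where "xs = [x,y,z]" by (auto simp: length_Suc_conv numeral_3_eq_3)
  moreover have "E (xs!0) (xs!1)" "E (xs!1) (xs!2)" using xs(5) spec[OF xs(5), of 1] by (auto simp: numeral_2_eq_2)
  ultimately show "(\<exists>w\<in>V. E u w \<and> E w v) \<and> u \<in> V \<and> v \<in> V"
    using xs by auto
next
  assume "(\<exists>w\<in>V. E u w \<and> E w v) \<and> u \<in> V \<and> v \<in> V"
  then obtain w where w: "w \<in> V" "E u w" "E w v" "u \<in> V" "v \<in> V" by blast
  have "\<forall>i<2. E ([u,w,v] ! i) ([u,w,v] ! Suc i)"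
    using w by (auto simp: less_2_cases_iff)
  then show "has_walk V E u v 2" unfolding has_walk_def using w
    by (intro exI[of _ "[u,w,v]"]) auto
qed

lemma gd: assumes "has_walk V E u v j" "\<forall>i<j. \<not> has_walk V E u v i"
  shows "graph_dist_eq V E u v k \<longleftrightarrow> k = j"
  using assms unfolding graph_dist_eq_def by (metis linorder_neqE_nat)
lemma kn_dist:
  assumes "u \<in> Kn_V n" "v \<in> Kn_V n"
  shows "graph_dist_eq (Kn_V n) (Kn_E n) u v k \<longleftrightarrow> k = (if u = v then 0 else 1)"
proof (cases "u = v")
  case True
  then show ?thesis using gd[of "Kn_V n" "Kn_E n" u v 0 k] assms by (simp add: hw0)
next
  case False
  have "has_walk (Kn_V n) (Kn_E n) u v 1" using assms False by (simp add: hw1 hw1' Kn_E_def Kn_V_def)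
  moreover have "\<forall>i<1. \<not> has_walk (Kn_V n) (Kn_E n) u v i" using False by (simp add: hw0)
  ultimately show ?thesis using gd[of "Kn_V n" "Kn_E n" u v 1 k] False by simp
qed

lemma kmn_dist:
  assumes "u \<in> Kmn_V m n" "v \<in> Kmn_V m n" "m > 0" "n > 0"
  shows "graph_dist_eq (Kmn_V m n) (Kmn_E m n) u v k \<longleftrightarrow>
     k = (if u = v then 0 else if isl u \<noteq> isl v then 1 else 2)"
proof (cases "u = v")
  case True
  then show ?thesis using gd[of "Kmn_V m n" "Kmn_E m n" u v 0 k] assms by (simp add: hw0)
next
  case False
  note F = False
  show ?thesis
  proof (cases "isl u \<noteq> isl v")
    case True
    have "has_walk (Kmn_V m n) (Kmn_E m n) u v 1" using assms True
      by (cases u; cases v; simp add: hw1 hw1' Kmn_E_def)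
    moreover have "\<forall>i<1. \<not> has_walk (Kmn_V m n) (Kmn_E m n) u v i" using F by (simp add: hw0)
    ultimately show ?thesis using gd[of "Kmn_V m n" "Kmn_E m n" u v 1 k] F True by simp
  next
    case False
    have "has_walk (Kmn_V m n) (Kmn_E m n) u v 2"
    proof (cases "isl u")
      case True
      have "Inr 0 \<in> Kmn_V m n" using assms by (simp add: Kmn_V_def)
      then show ?thesis using assms True False
        by (cases u; cases v; auto simp add: hw2 Kmn_E_def)
    next
      case c: False
      have "Inl 0 \<in> Kmn_V m n" using assms by (simp add: Kmn_V_def)
      then show ?thesis using assms c False
        by (cases u; cases v; auto simp add: hw2 Kmn_E_def)
    qed
    moreover have "\<forall>i<2. \<not> has_walk (Kmn_V m n) (Kmn_E m n) u v i" using F False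
      by (cases u; cases v; auto simp add: hw0 hw1 hw1' Kmn_E_def less_2_cases_iff)
    ultimately show ?thesis using gd[of "Kmn_V m n" "Kmn_E m n" u v 2 k] F False by simp
  qed
qed

lemma kn_part: assumes "n > 1" shows "\<not> admits_ext_irr_dom_set (Kn_V n) (Kn_E n)"
proof
  assume "admits_ext_irr_dom_set (Kn_V n) (Kn_E n)"
  then obtain S lab where SL: "ext_irr_dom_set (Kn_V n) (Kn_E n) S lab"
    unfolding admits_ext_irr_dom_set_def by blast
  then have S: "S \<subseteq> Kn_V n" "inj_on lab S"
    and dom: "\<forall>u\<in>Kn_V n. \<exists>v\<in>S. dominates (Kn_V n) (Kn_E n) lab v u"
    unfolding ext_irr_dom_set_def by auto
  obtain a where a: "a \<in> S" "lab a = 0" using SL unfolding ext_irr_dom_set_def by blast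
  have D: "dominates (Kn_V n) (Kn_E n) lab v u \<longleftrightarrow> lab v = (if u = v then 0 else 1)"
    if "u \<in> Kn_V n" "v \<in> S" for u v
    using that S kn_dist[of u n v "lab v"] unfolding dominates_def by auto
  obtain u where u: "u \<in> Kn_V n" "u \<noteq> a"
  proof -
    have "0 \<in> Kn_V n" "1 \<in> Kn_V n" using assms by (auto simp: Kn_V_def)
    then show ?thesis using that by (cases "a = 0") auto
  qed
  then obtain v where v: "v \<in> S" "lab v = (if u = v then 0 else 1)" using dom D by blast
  have "u \<noteq> v"
  proof
    assume "u = v" then have "lab v = lab a" using v a by simp
    then show False using S(2) v a u \<open>u = v\<close> by (meson inj_onD)
  qed
  hence v1: "lab v = 1" using v by simp
  have "v \<in> Kn_V n" using v S by blast
  then obtain x where x: "x \<in> S" "lab x = (if v = x then 0 else 1)" using dom D by blast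
  show False
  proof (cases "v = x")
    case True then show False using x v1 by simp
  next
    case ne: False then have "lab x = lab v" using x v1 by simp
    then have "x = v" using inj_onD[OF S(2) _ x(1) v(1)] by blast
    then show False using ne by simp
  qed
qed

lemma kmn_part: assumes "m > 0" "n > 0" shows "\<not> admits_ext_irr_dom_set (Kmn_V m n) (Kmn_E m n)"
proof
  let ?V = "Kmn_V m n"
  assume "admits_ext_irr_dom_set ?V (Kmn_E m n)"
  then obtain S lab where SL: "ext_irr_dom_set ?V (Kmn_E m n) S lab"
    unfolding admits_ext_irr_dom_set_def by blast
  then have S: "S \<subseteq> ?V" "inj_on lab S"
    and dom: "\<forall>u\<in>?V. \<exists>v\<in>S. dominates ?V (Kmn_E m n) lab v u"
    unfolding ext_irr_dom_set_def by auto
  obtain a where a: "a \<in> S" "lab a = 0" using SL unfolding ext_irr_dom_set_def by blast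
  have D: "dominates ?V (Kmn_E m n) lab v u \<longleftrightarrow>
      lab v = (if u = v then 0 else if isl u \<noteq> isl v then 1 else 2)"
    if "u \<in> ?V" "v \<in> S" for u v
    using that S kmn_dist[of u m n v "lab v"] assms unfolding dominates_def by auto
  have inj: "x = y" if "x \<in> S" "y \<in> S" "lab x = lab y" for x y using that S(2) by (meson inj_onD)
  have inV: "x \<in> ?V" if "x \<in> S" for x using that S by blast
  obtain u where u: "u \<in> ?V" "u \<noteq> a"
  proof -
    have "Inl 0 \<in> ?V" "Inr 0 \<in> ?V" using assms by (auto simp: Kmn_V_def)
    then show ?thesis using that by (cases a) auto
  qed
  then obtain v where v: "v \<in> S" "lab v = (if u = v then 0 else if isl u \<noteq> isl v then 1 else 2)"
    using dom D by blast
  have "u \<noteq> v"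
  proof
    assume "u = v" then have "lab v = lab a" using v a by simp
    then show False using inj v a u \<open>u = v\<close> by blast
  qed
  show False
  proof (cases "\<exists>b\<in>S. lab b = 1")
    case True
    then obtain b where b: "b \<in> S" "lab b = 1" by blast
    obtain x where x: "x \<in> S" "lab x = (if b = x then 0 else if isl b \<noteq> isl x then 1 else 2)"
      using dom D inV[OF b(1)] by blast
    have "b \<noteq> x" using x b by auto
    have "isl b = isl x"
    proof (rule ccontr)
      assume "isl b \<noteq> isl x"
      then have "lab x = lab b" using x b \<open>b \<noteq> x\<close> by simp
      then show False using inj x b \<open>b \<noteq> x\<close> by blast
    qed
    hence x2: "lab x = 2" using x \<open>b \<noteq> x\<close> by simp
    obtain y where y: "y \<in> S" "lab y = (if x = y then 0 else if isl x \<noteq> isl y then 1 else 2)"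
      using dom D inV[OF x(1)] by blast
    show False
    proof (cases "x = y")
      case True then show False using y x2 by simp
    next
      case ne: False
      show False
      proof (cases "isl x \<noteq> isl y")
        case True
        then have "lab y = lab b" using y ne b by simp
        then have "y = b" using inj y b by blast
        then show False using True \<open>isl b = isl x\<close> by simp
      next
        case False
        then have "lab y = lab x" using y ne x2 by simp
        then show False using inj y x ne by blast
      qed
    qed
  next
    case False
    hence v2: "lab v = 2" using v \<open>u \<noteq> v\<close> by (auto split: if_splits)
    obtain y where y: "y \<in> S" "lab y = (if v = y then 0 else if isl v \<noteq> isl y then 1 else 2)"
      using dom D inV[OF v(1)] by blast
    show False
    proof (cases "v = y")
      case True then show False using y v2 by simp
    next
      case ne: False
      then have "lab y = 1 \<or> lab y = lab v" using y v2 by (auto split: if_splits)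
      then show False using False y inj v ne by blast
    qed
  qed
qed

theorem corollary2p3:
  shows "(\<forall>n::nat. n > 1 \<longrightarrow> \<not> admits_ext_irr_dom_set (Kn_V n) (Kn_E n))
    \<and> (\<forall>m n::nat. m > 0 \<longrightarrow> n > 0 \<longrightarrow> \<not> admits_ext_irr_dom_set (Kmn_V m n) (Kmn_E m n))"
  using kn_part kmn_part by blast
end
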